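(* Let $\gamma$ be a unit speed geodesic ($k_g\equiv 0$) on a smooth oriented surface $M\subset E^3$, with nowhere-vanishing normal curvature, whose position vector always lies in the plane spanned by $\{T,V\}$. Then $\gamma$ is an isophotic curve if and only if $\dfrac{\kappa^2}{(\kappa^2+\tau^2)^{3/2}}$ is a constant function of $s$, where $\kappa,\tau$ are the curvature and torsion of $\gamma$.
   Context: For a unit speed curve $\gamma$ on an oriented surface $M\subset E^3$, the Darboux frame is $T=\gamma'$, $U$ = unit normal of $M$ along $\gamma$, $V = U\times T$, satisfying $T' = k_g V + k_n U$, $V' = -k_g T + \tau_g U$, $U' = -k_n T - \tau_g V$; here $k_g$, $k_n$, $\tau_g$ are the geodesic curvature, normal curvature and geodesic torsion. The curve $\gamma$ is an isophotic curve if there is a fixed unit vector $d$ and a constant angle $\phi$ with $\langle U, d\rangle = \cos\phi$ along $\gamma$. "Position vector lies in the plane spanned by $\{T,V\}$" means $\gamma(s) = \mu_1(s)T(s) + \mu_2(s)V(s)$ for differentiable functions $\mu_1,\mu_2$. $\kappa,\tau$ denote the Frenet curvature and torsion of $\gamma$. *)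

theory Defs
  imports "HOL-Analysis.Analysis" "HOL-Analysis.Cross3"
begin

definition smooth_curve_on :: "(real \<Rightarrow> 'a::real_normed_vector) \<Rightarrow> real set \<Rightarrow> bool" where
  "smooth_curve_on f I \<longleftrightarrow>
     (\<exists>D. D 0 = f \<and> (\<forall>n. \<forall>s\<in>I. (D n has_vector_derivative D (Suc n) s) (at s)))"

definition d1 :: "(real \<Rightarrow> real^3) \<Rightarrow> real \<Rightarrow> real^3" where
  "d1 g s = vector_derivative g (at s)"
definition d2 :: "(real \<Rightarrow> real^3) \<Rightarrow> real \<Rightarrow> real^3" where
  "d2 g s = vector_derivative (d1 g) (at s)"
definition d3 :: "(real \<Rightarrow> real^3) \<Rightarrow> real \<Rightarrow> real^3" where
  "d3 g s = vector_derivative (d2 g) (at s)"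

text \<open>Frenet curvature and torsion of a space curve (general-parameter formulas;
  for a unit speed curve the curvature is |gamma''|).\<close>
definition frenet_curvature :: "(real \<Rightarrow> real^3) \<Rightarrow> real \<Rightarrow> real" where
  "frenet_curvature g s = norm (cross3 (d1 g s) (d2 g s)) / norm (d1 g s) ^ 3"
definition frenet_torsion :: "(real \<Rightarrow> real^3) \<Rightarrow> real \<Rightarrow> real" where
  "frenet_torsion g s = ((cross3 (d1 g s) (d2 g s)) \<bullet> d3 g s) / (norm (cross3 (d1 g s) (d2 g s)))\<^sup>2"

definition isophotic :: "(real \<Rightarrow> real^3) \<Rightarrow> real set \<Rightarrow> bool" where
  "isophotic U I \<longleftrightarrow> (\<exists>d \<phi>. norm d = 1 \<and> (\<forall>s\<in>I. U s \<bullet> d = cos \<phi>))"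

end

theory Submission
  imports Defs
begin
lemma hvd_inner:
  assumes "(f has_vector_derivative f') (at x)" "(g has_vector_derivative g') (at x)"
  shows "((\<lambda>s. f s \<bullet> g s) has_real_derivative (f' \<bullet> g x + f x \<bullet> g')) (at x)"
  unfolding has_field_derivative_def
proof (rule has_derivative_eq_rhs)
  show "((\<lambda>s. f s \<bullet> g s) has_derivative (\<lambda>h. f x \<bullet> (h *\<^sub>R g') + (h *\<^sub>R f') \<bullet> g x)) (at x)"
    using has_derivative_inner[OF assms[unfolded has_vector_derivative_def]] .
  show "(\<lambda>h. f x \<bullet> (h *\<^sub>R g') + (h *\<^sub>R f') \<bullet> g x) = (*) (f' \<bullet> g x + f x \<bullet> g')"
    by (rule ext) (simp add: algebra_simps)
qed

lemma poly9: "((u2*t3 - u3*t2)*d1 + (u3*t1 - u1*t3)*d2 + (u1*t2-u2*t1)*d3)^2 =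
 (u1*u1+u2*u2+u3*u3)*(t1*t1+t2*t2+t3*t3)*(d1*d1+d2*d2+d3*d3) + 2*(u1*t1+u2*t2+u3*t3)*(t1*d1+t2*d2+t3*d3)*(d1*u1+d2*u2+d3*u3)
 - (u1*u1+u2*u2+u3*u3)*(t1*d1+t2*d2+t3*d3)^2 - (t1*t1+t2*t2+t3*t3)*(u1*d1+u2*d2+u3*d3)^2 - (d1*d1+d2*d2+d3*d3)*(u1*t1+u2*t2+u3*t3)^2"
  for u1 u2 u3 t1 t2 t3 d1 d2 d3 :: real
  by (simp add: power2_eq_square algebra_simps)
lemma gram3:
  fixes u t d :: "real^3"
  shows "((cross3 u t) \<bullet> d)^2 = (u\<bullet>u)*(t\<bullet>t)*(d\<bullet>d) + 2*(u\<bullet>t)*(t\<bullet>d)*(d\<bullet>u) - (u\<bullet>u)*(t\<bullet>d)^2 - (t\<bullet>t)*(u\<bullet>d)^2 - (d\<bullet>d)*(u\<bullet>t)^2"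
  unfolding cross3_def inner_vec_def sum_3 by (simp add: vector_def poly9)

lemma hvd_eq_open:
  fixes f g :: "real \<Rightarrow> 'b::real_normed_vector"
  assumes "(f has_vector_derivative f') (at x)" "open S" "x \<in> S" "\<forall>y\<in>S. f y = g y"
  shows "(g has_vector_derivative f') (at x)"
  using has_vector_derivative_transform_within_open[OF assms(1,2,3)] assms(4) by auto

lemma hrd_eq_open:
  fixes f g :: "real \<Rightarrow> real"
  assumes "(f has_real_derivative f') (at x)" "open S" "x \<in> S" "\<forall>y\<in>S. f y = g y"
  shows "(g has_real_derivative f') (at x)"
  using assms hvd_eq_open[of f f' x S g] by (simp add: has_real_derivative_iff_has_vector_derivative)

lemma hvd_const_open:
  fixes f :: "real \<Rightarrow> 'b::real_normed_vector"
  assumes "(f has_vector_derivative f') (at x)" "open S" "x \<in> S" "\<forall>y\<in>S. f y = c"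
  shows "f' = 0"
proof -
  have "((\<lambda>y. c) has_vector_derivative f') (at x)" using hvd_eq_open[OF assms(1-3)] assms(4) by auto
  then show ?thesis using vector_derivative_unique_at[OF _ has_vector_derivative_const] by blast
qed

lemma hrd_const_open:
  fixes f :: "real \<Rightarrow> real"
  assumes "(f has_real_derivative f') (at x)" "open S" "x \<in> S" "\<forall>y\<in>S. f y = c"
  shows "f' = 0"
  using assms hvd_const_open[of f f' x S c] by (simp add: has_real_derivative_iff_has_vector_derivative)

lemma zero_deriv_const:
  fixes f :: "real \<Rightarrow> 'b::real_normed_vector"
  assumes "is_interval S" "open S" "\<forall>x\<in>S. (f has_vector_derivative 0) (at x)"
  shows "\<exists>c. \<forall>x\<in>S. f x = c"
proof (rule has_derivative_zero_constant)
  show "convex S" using is_interval_convex[OF assms(1)] .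
  fix x assume "x \<in> S"
  then have "(f has_derivative (\<lambda>h. h *\<^sub>R 0)) (at x)" using assms(3) by (simp add: has_vector_derivative_def)
  then show "(f has_derivative (\<lambda>h. 0)) (at x within S)" by (simp add: has_derivative_at_withinI)
qed

lemma zero_deriv_const_real:
  fixes f :: "real \<Rightarrow> real"
  assumes "is_interval S" "open S" "\<forall>x\<in>S. (f has_real_derivative 0) (at x)"
  shows "\<exists>c. \<forall>x\<in>S. f x = c"
  using assms zero_deriv_const[of S f] by (simp add: has_real_derivative_iff_has_vector_derivative)
lemma keyG: "a\<^sup>2 / ((a\<^sup>2 * w / b\<^sup>2) * (a * r / b)) = b^3 / (a * w * r)"
    if "a > 0" "b > 0" "r > 0" "w > 0" for a b r w :: real
    using that by (simp add: field_simps power2_eq_square power3_eq_cube)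

lemma keyF:
  fixes k q p t w :: real
  assumes "k \<noteq> 0" "q \<noteq> 0" "t = - k * p / q" "w = p\<^sup>2+q\<^sup>2"
  shows "k\<^sup>2 / (k\<^sup>2 + t\<^sup>2) powr (3/2) = \<bar>q\<bar>^3 / (\<bar>k\<bar> * w * sqrt w)"
proof -
  have wpos: "w > 0" using assms(2) unfolding assms(4) by (simp add: add_nonneg_pos)
  have X: "k\<^sup>2 + t\<^sup>2 = k\<^sup>2 * w / q\<^sup>2" using assms(1,2) unfolding assms(3,4) by (simp add: field_simps power2_eq_square)
  have Xpos: "k\<^sup>2 * w / q\<^sup>2 > 0" using assms wpos by simp
  have "(k\<^sup>2 * w / q\<^sup>2) powr (3/2) = (k\<^sup>2 * w / q\<^sup>2) powr (1 + 1/2)" by simp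
  also have "\<dots> = (k\<^sup>2 * w / q\<^sup>2) powr 1 * (k\<^sup>2 * w / q\<^sup>2) powr (1/2)"
    by (rule powr_add)
  also have "\<dots> = (k\<^sup>2 * w / q\<^sup>2) * sqrt (k\<^sup>2 * w / q\<^sup>2)"
    by (simp only: powr_half_sqrt[OF less_imp_le[OF Xpos]] powr_one[OF less_imp_le[OF Xpos]])
  also have "sqrt (k\<^sup>2 * w / q\<^sup>2) = \<bar>k\<bar> * sqrt w / \<bar>q\<bar>"
    by (simp add: real_sqrt_mult real_sqrt_divide)
  finally have P: "(k\<^sup>2 + t\<^sup>2) powr (3/2) = (k\<^sup>2 * w / q\<^sup>2) * (\<bar>k\<bar> * sqrt w / \<bar>q\<bar>)" using X by simp
  have sw: "sqrt w > 0" using wpos by simp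
  have ak: "\<bar>k\<bar> > 0" and aq: "\<bar>q\<bar> > 0" using assms by auto
  have "k\<^sup>2 / (k\<^sup>2 + t\<^sup>2) powr (3/2) = \<bar>k\<bar>\<^sup>2 / ((\<bar>k\<bar>\<^sup>2 * w / \<bar>q\<bar>\<^sup>2) * (\<bar>k\<bar> * sqrt w / \<bar>q\<bar>))"
    by (simp only: P power2_abs)
  also have "\<dots> = \<bar>q\<bar>^3 / (\<bar>k\<bar> * w * sqrt w)" by (rule keyG[OF ak aq sw wpos])
  finally show ?thesis .
qed
lemma frame_zero:
  fixes T U V :: "'a::real_normed_vector" and f :: "real \<Rightarrow> 'a"
  assumes h: "(f has_vector_derivative (a1 *\<^sub>R (k *\<^sub>R U) + a2 *\<^sub>R T + (b1 *\<^sub>R (t *\<^sub>R U) + b2 *\<^sub>R V)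
        + (e *\<^sub>R (- k *\<^sub>R T - t *\<^sub>R V) + 0 *\<^sub>R U))) F"
    and c1: "a2 - e * k = 0" and c2: "a1 * k + b1 * t = 0" and c3: "b2 - e * t = 0"
  shows "(f has_vector_derivative 0) F"
proof -
  have "a1 *\<^sub>R (k *\<^sub>R U) + a2 *\<^sub>R T + (b1 *\<^sub>R (t *\<^sub>R U) + b2 *\<^sub>R V)
        + (e *\<^sub>R (- k *\<^sub>R T - t *\<^sub>R V) + 0 *\<^sub>R U)
      = (a2 - e * k) *\<^sub>R T + (a1 * k + b1 * t) *\<^sub>R U + (b2 - e * t) *\<^sub>R V"
    by (simp add: algebra_simps)
  then show ?thesis using h c1 c2 c3 by simp
qed

lemma c1lem:
  fixes q r m K e \<sigma> w :: real
  assumes "q \<noteq> 0" "r > 0" "w > 0" "w = m\<^sup>2 + q\<^sup>2"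
  shows "1 / q * ((e * \<sigma> * K / q) / r) + (- (e * \<sigma> * K / q) * m / (w * r)) * (m / q)
        - e * (\<sigma> * K / (w * r)) = 0"
proof -
  have "1 / q * ((e * \<sigma> * K / q) / r) + (- (e * \<sigma> * K / q) * m / (w * r)) * (m / q)
        - e * (\<sigma> * K / (w * r)) = e * \<sigma> * K * (w - m\<^sup>2 - q\<^sup>2) / (q\<^sup>2 * w * r)"
    using assms(1-3) by (simp add: field_simps power2_eq_square)
  then show ?thesis using assms(4) by simp
qed
lemma c3lem:
  fixes q r m K e \<sigma> w :: real
  assumes "q \<noteq> 0" "r > 0" "w > 0"
  shows "- (e * \<sigma> * K / q) * m / (w * r) - e * (- (\<sigma> * K / (w * r)) * m / q) = 0"
  using assms by (simp add: field_simps)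

theorem corollary4p1:
  fixes \<gamma> U T V :: "real \<Rightarrow> real^3" and kg kn \<tau>g :: "real \<Rightarrow> real" and I :: "real set"
  assumes I: "open I" "is_interval I" "I \<noteq> {}"
    and smooth: "smooth_curve_on \<gamma> I" "smooth_curve_on U I"
    and T_def: "\<forall>s\<in>I. T s = vector_derivative \<gamma> (at s)"
    and unit_speed: "\<forall>s\<in>I. norm (T s) = 1"
    and U_unit: "\<forall>s\<in>I. norm (U s) = 1"
    and U_normal: "\<forall>s\<in>I. U s \<bullet> T s = 0"
    and V_def: "\<forall>s\<in>I. V s = cross3 (U s) (T s)"
    and darboux_T: "\<forall>s\<in>I. (T has_vector_derivative (kg s *\<^sub>R V s + kn s *\<^sub>R U s)) (at s)"
    and darboux_V: "\<forall>s\<in>I. (V has_vector_derivative (- kg s *\<^sub>R T s + \<tau>g s *\<^sub>R U s)) (at s)"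
    and darboux_U: "\<forall>s\<in>I. (U has_vector_derivative (- kn s *\<^sub>R T s - \<tau>g s *\<^sub>R V s)) (at s)"
    and geodesic: "\<forall>s\<in>I. kg s = 0"
    and kn_nonzero: "\<forall>s\<in>I. kn s \<noteq> 0"
    and position: "\<exists>\<mu>1 \<mu>2. \<mu>1 differentiable_on I \<and> \<mu>2 differentiable_on I \<and>
                     (\<forall>s\<in>I. \<gamma> s = \<mu>1 s *\<^sub>R T s + \<mu>2 s *\<^sub>R V s)"
  shows "isophotic U I \<longleftrightarrow>
           (\<exists>c. \<forall>s\<in>I. (frenet_curvature \<gamma> s)\<^sup>2 /
                  ((frenet_curvature \<gamma> s)\<^sup>2 + (frenet_torsion \<gamma> s)\<^sup>2) powr (3/2) = c)"
proof -
  from position obtain \<mu>1 \<mu>2 where mu1: "\<mu>1 differentiable_on I" and mu2: "\<mu>2 differentiable_on I"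
     and pos: "\<forall>s\<in>I. \<gamma> s = \<mu>1 s *\<^sub>R T s + \<mu>2 s *\<^sub>R V s" by blast
  obtain Dg where Dg0: "Dg 0 = \<gamma>" and Dg: "\<forall>n. \<forall>s\<in>I. (Dg n has_vector_derivative Dg (Suc n) s) (at s)"
    using smooth(1) unfolding smooth_curve_on_def by blast
  have DgS: "(Dg n has_vector_derivative Dg (Suc n) s) (at s)" if "s\<in>I" for n s using Dg that by blast
  have hT: "(T has_vector_derivative kn s *\<^sub>R U s) (at s)" if "s\<in>I" for s
    using darboux_T geodesic that by auto
  have hV: "(V has_vector_derivative \<tau>g s *\<^sub>R U s) (at s)" if "s\<in>I" for s
    using darboux_V geodesic that by auto
  have hU: "(U has_vector_derivative (- kn s *\<^sub>R T s - \<tau>g s *\<^sub>R V s)) (at s)" if "s\<in>I" for s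
    using darboux_U that by auto
  have TT: "T s \<bullet> T s = 1" if "s\<in>I" for s
    using power2_norm_eq_inner[of "T s"] unit_speed that by simp
  have UU: "U s \<bullet> U s = 1" if "s\<in>I" for s
    using power2_norm_eq_inner[of "U s"] U_unit that by simp
  have UT: "U s \<bullet> T s = 0" "T s \<bullet> U s = 0" if "s\<in>I" for s
    using U_normal that by (auto simp: inner_commute)
  have VV: "V s \<bullet> V s = 1" if "s\<in>I" for s
  proof -
    have "(norm (V s))\<^sup>2 = 1"
      using norm_cross_dot[of "U s" "T s"] V_def U_unit unit_speed UT(1)[OF that] that by simp
    then show ?thesis by (simp add: power2_norm_eq_inner)
  qed
  have VT: "V s \<bullet> T s = 0" "T s \<bullet> V s = 0" "V s \<bullet> U s = 0" "U s \<bullet> V s = 0" if "s\<in>I" for s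
    using V_def that dot_cross_self[of "U s" "T s"] by (auto simp: inner_commute)
  note ON = TT UU UT VV VT
  have hg: "(\<gamma> has_vector_derivative T s) (at s)" and D1: "Dg (Suc 0) s = T s" if "s\<in>I" for s
  proof -
    have h0: "(\<gamma> has_vector_derivative Dg (Suc 0) s) (at s)" using DgS[OF that, of 0] Dg0 by simp
    have "T s = Dg (Suc 0) s" using T_def that vector_derivative_at[OF h0] by simp
    then show "(\<gamma> has_vector_derivative T s) (at s)" "Dg (Suc 0) s = T s" using h0 by auto
  qed
  have D2: "Dg (Suc (Suc 0)) s = kn s *\<^sub>R U s" if "s\<in>I" for s
  proof -
    have "\<forall>y\<in>I. Dg (Suc 0) y = T y" using D1 by simp
    then have "(T has_vector_derivative Dg (Suc (Suc 0)) s) (at s)"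
      by (rule hvd_eq_open[OF DgS[OF that, of "Suc 0"] I(1) that])
    then show ?thesis by (rule vector_derivative_unique_at[OF _ hT[OF that]])
  qed
  have dmu: "(\<mu>1 has_real_derivative deriv \<mu>1 s) (at s)" "(\<mu>2 has_real_derivative deriv \<mu>2 s) (at s)"
    if "s\<in>I" for s
  proof -
    have "\<mu>1 differentiable (at s within I)" "\<mu>2 differentiable (at s within I)"
      using mu1 mu2 that unfolding differentiable_on_def by blast+
    then have "\<mu>1 differentiable (at s)" "\<mu>2 differentiable (at s)"
      unfolding at_within_open[OF that I(1)] .
    then show "(\<mu>1 has_real_derivative deriv \<mu>1 s) (at s)" "(\<mu>2 has_real_derivative deriv \<mu>2 s) (at s)"
      by (simp_all only: DERIV_deriv_iff_real_differentiable)
  qed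
  have mueq: "deriv \<mu>1 s = 1" "deriv \<mu>2 s = 0" "\<mu>1 s * kn s + \<mu>2 s * \<tau>g s = 0" if "s\<in>I" for s
  proof -
    have R: "((\<lambda>s. \<mu>1 s *\<^sub>R T s + \<mu>2 s *\<^sub>R V s) has_vector_derivative
       ((\<mu>1 s *\<^sub>R (kn s *\<^sub>R U s) + deriv \<mu>1 s *\<^sub>R T s) + (\<mu>2 s *\<^sub>R (\<tau>g s *\<^sub>R U s) + deriv \<mu>2 s *\<^sub>R V s))) (at s)"
      by (intro has_vector_derivative_add has_vector_derivative_scaleR dmu hT hV that)
    have eqR: "\<forall>y\<in>I. \<mu>1 y *\<^sub>R T y + \<mu>2 y *\<^sub>R V y = \<gamma> y" using pos by simp
    have "(\<gamma> has_vector_derivative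
       ((\<mu>1 s *\<^sub>R (kn s *\<^sub>R U s) + deriv \<mu>1 s *\<^sub>R T s) + (\<mu>2 s *\<^sub>R (\<tau>g s *\<^sub>R U s) + deriv \<mu>2 s *\<^sub>R V s))) (at s)"
      using hvd_eq_open[OF R I(1) that eqR] .
    then have E: "T s = (\<mu>1 s *\<^sub>R (kn s *\<^sub>R U s) + deriv \<mu>1 s *\<^sub>R T s) + (\<mu>2 s *\<^sub>R (\<tau>g s *\<^sub>R U s) + deriv \<mu>2 s *\<^sub>R V s)"
      by (rule vector_derivative_unique_at[OF hg[OF that]])
    have "T s \<bullet> T s = ((\<mu>1 s *\<^sub>R (kn s *\<^sub>R U s) + deriv \<mu>1 s *\<^sub>R T s) + (\<mu>2 s *\<^sub>R (\<tau>g s *\<^sub>R U s) + deriv \<mu>2 s *\<^sub>R V s)) \<bullet> T s"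
      using E by simp
    then show "deriv \<mu>1 s = 1" using ON[OF that] by (simp add: inner_add_left)
    have "T s \<bullet> V s = ((\<mu>1 s *\<^sub>R (kn s *\<^sub>R U s) + deriv \<mu>1 s *\<^sub>R T s) + (\<mu>2 s *\<^sub>R (\<tau>g s *\<^sub>R U s) + deriv \<mu>2 s *\<^sub>R V s)) \<bullet> V s"
      using E by simp
    then show "deriv \<mu>2 s = 0" using ON[OF that] by (simp add: inner_add_left)
    have "T s \<bullet> U s = ((\<mu>1 s *\<^sub>R (kn s *\<^sub>R U s) + deriv \<mu>1 s *\<^sub>R T s) + (\<mu>2 s *\<^sub>R (\<tau>g s *\<^sub>R U s) + deriv \<mu>2 s *\<^sub>R V s)) \<bullet> U s"
      using E by simp
    then show "\<mu>1 s * kn s + \<mu>2 s * \<tau>g s = 0" using ON[OF that] by (simp add: inner_add_left algebra_simps)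
  qed
  have dmu1: "(\<mu>1 has_real_derivative 1) (at s)" if "s\<in>I" for s using dmu(1)[OF that] mueq(1)[OF that] by simp
  obtain q where q: "\<forall>s\<in>I. \<mu>2 s = q"
    using zero_deriv_const_real[OF I(2) I(1), of \<mu>2] dmu(2) mueq(2) by auto
  have qnz: "q \<noteq> 0"
  proof
    assume "q = 0"
    then have "\<forall>s\<in>I. \<mu>1 s = 0" using mueq(3) q kn_nonzero by auto
    moreover obtain s0 where "s0 \<in> I" using I(3) by blast
    ultimately show False using hrd_const_open[OF dmu1 I(1)] by auto
  qed
  have tau: "\<tau>g s = - kn s * \<mu>1 s / q" if "s\<in>I" for s
    using mueq(3)[OF that] q that qnz by (simp add: field_simps)
  have d1: "d1 \<gamma> s = T s" if "s\<in>I" for s using hg[OF that] by (simp add: d1_def vector_derivative_at)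
  have d2: "d2 \<gamma> s = kn s *\<^sub>R U s" if "s\<in>I" for s
  proof -
    have "\<forall>y\<in>I. T y = d1 \<gamma> y" using d1 by simp
    then have "(d1 \<gamma> has_vector_derivative kn s *\<^sub>R U s) (at s)"
      by (rule hvd_eq_open[OF hT[OF that] I(1) that])
    then show ?thesis by (simp add: d2_def vector_derivative_at)
  qed
  have d3: "d3 \<gamma> s = Dg (Suc (Suc (Suc 0))) s" if "s\<in>I" for s
  proof -
    have "\<forall>y\<in>I. Dg (Suc (Suc 0)) y = d2 \<gamma> y" using d2 D2 by simp
    then have "(d2 \<gamma> has_vector_derivative Dg (Suc (Suc (Suc 0))) s) (at s)"
      by (rule hvd_eq_open[OF DgS[OF that, of "Suc (Suc 0)"] I(1) that])
    then show ?thesis by (simp add: d3_def vector_derivative_at)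
  qed
  have VD3: "V s \<bullet> Dg (Suc (Suc (Suc 0))) s = - \<tau>g s * kn s" if "s\<in>I" for s
  proof -
    have dd: "((\<lambda>y. V y \<bullet> Dg (Suc (Suc 0)) y) has_real_derivative
        ((\<tau>g s *\<^sub>R U s) \<bullet> Dg (Suc (Suc 0)) s + V s \<bullet> Dg (Suc (Suc (Suc 0))) s)) (at s)"
      using hvd_inner[OF hV[OF that] DgS[OF that, of "Suc (Suc 0)"]] .
    have z: "\<forall>y\<in>I. V y \<bullet> Dg (Suc (Suc 0)) y = 0" using D2 ON by simp
    have "(\<tau>g s *\<^sub>R U s) \<bullet> Dg (Suc (Suc 0)) s + V s \<bullet> Dg (Suc (Suc (Suc 0))) s = 0"
      using hrd_const_open[OF dd I(1) that z] .
    then show ?thesis using D2[OF that] ON[OF that] by (simp add: algebra_simps)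
  qed
  have cr: "cross3 (d1 \<gamma> s) (d2 \<gamma> s) = (- kn s) *\<^sub>R V s" if "s\<in>I" for s
    using d1[OF that] d2[OF that] V_def that cross_mult_right[of "T s" "kn s" "U s"] cross_skew[of "T s" "U s"]
    by simp
  have curv: "frenet_curvature \<gamma> s = \<bar>kn s\<bar>" if "s\<in>I" for s
  proof -
    have "norm (V s) = 1" using VV[OF that] by (simp add: norm_eq_sqrt_inner)
    then show ?thesis using cr[OF that] d1[OF that] unit_speed that by (simp add: frenet_curvature_def)
  qed
  have tors: "frenet_torsion \<gamma> s = \<tau>g s" if "s\<in>I" for s
  proof -
    have "norm (V s) = 1" using VV[OF that] by (simp add: norm_eq_sqrt_inner)
    then show ?thesis using cr[OF that] d3[OF that] VD3[OF that] kn_nonzero that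
      by (simp add: frenet_torsion_def power2_eq_square)
  qed
  define w where "w s = (\<mu>1 s)\<^sup>2 + q\<^sup>2" for s
  have wpos: "w s > 0" for s using qnz unfolding w_def by (simp add: add_nonneg_pos)
  have F: "(frenet_curvature \<gamma> s)\<^sup>2 / ((frenet_curvature \<gamma> s)\<^sup>2 + (frenet_torsion \<gamma> s)\<^sup>2) powr (3/2)
       = \<bar>q\<bar>^3 / (\<bar>kn s\<bar> * w s * sqrt (w s))" if "s\<in>I" for s
    using keyF[OF kn_nonzero[rule_format, OF that] qnz tau[OF that] w_def] curv[OF that] tors[OF that]
    by simp
  show ?thesis
  proof
    assume "isophotic U I"
    then obtain d \<phi> where nd: "norm d = 1" and Ud: "\<forall>s\<in>I. U s \<bullet> d = cos \<phi>"
      unfolding isophotic_def by blast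
    define e where "e = cos \<phi>"
    define a where "a s = T s \<bullet> d" for s
    define b where "b s = V s \<bullet> d" for s
    have Ude: "\<forall>s\<in>I. U s \<bullet> d = e" using Ud unfolding e_def .
    have da: "(a has_real_derivative kn s * e) (at s)" if "s\<in>I" for s
    proof -
      have h1: "((\<lambda>y. T y \<bullet> d) has_real_derivative ((kn s *\<^sub>R U s) \<bullet> d + T s \<bullet> 0)) (at s)"
        by (rule hvd_inner[OF hT[OF that] has_vector_derivative_const])
      have h2: "(kn s *\<^sub>R U s) \<bullet> d + T s \<bullet> 0 = kn s * e" using Ude that by simp
      show ?thesis unfolding a_def using h1[unfolded h2] .
    qed
    have db: "(b has_real_derivative \<tau>g s * e) (at s)" if "s\<in>I" for s
    proof -
      have h1: "((\<lambda>y. V y \<bullet> d) has_real_derivative ((\<tau>g s *\<^sub>R U s) \<bullet> d + V s \<bullet> 0)) (at s)"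
        by (rule hvd_inner[OF hV[OF that] has_vector_derivative_const])
      have h2: "(\<tau>g s *\<^sub>R U s) \<bullet> d + V s \<bullet> 0 = \<tau>g s * e" using Ude that by simp
      show ?thesis unfolding b_def using h1[unfolded h2] .
    qed
    have ab: "kn s * a s + \<tau>g s * b s = 0" if "s\<in>I" for s
    proof -
      have "((\<lambda>y. U y \<bullet> d) has_real_derivative ((- kn s *\<^sub>R T s - \<tau>g s *\<^sub>R V s) \<bullet> d + U s \<bullet> 0)) (at s)"
        by (rule hvd_inner[OF hU[OF that] has_vector_derivative_const])
      then have "(- kn s *\<^sub>R T s - \<tau>g s *\<^sub>R V s) \<bullet> d + U s \<bullet> 0 = 0"
        using hrd_const_open[OF _ I(1) that Ude] by blast
      then show ?thesis unfolding a_def b_def by (simp add: inner_diff_left)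
    qed
    have a_eq: "a s = \<mu>1 s * b s / q" if "s\<in>I" for s
    proof -
      have "kn s * (a s - \<mu>1 s * b s / q) = 0" using ab[OF that] tau[OF that] by (simp add: algebra_simps)
      then show ?thesis using kn_nonzero that by simp
    qed
    have b_eq: "b s = kn s * e * w s / q" if "s\<in>I" for s
    proof -
      have h1: "((\<lambda>y. \<mu>1 y * b y / q) has_real_derivative (1 * b s + \<tau>g s * e * \<mu>1 s) / q) (at s)"
        by (rule DERIV_cdivide[OF DERIV_mult[OF dmu1[OF that] db[OF that]]])
      have "\<forall>y\<in>I. \<mu>1 y * b y / q = a y" using a_eq by simp
      from hrd_eq_open[OF h1 I(1) that this]
      have "kn s * e = (1 * b s + \<tau>g s * e * \<mu>1 s) / q" using DERIV_unique da[OF that] by blast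
      then show ?thesis using tau[OF that] qnz unfolding w_def
        by (simp add: field_simps power2_eq_square)
    qed
    have dG: "((\<lambda>y. b y ^ 2 * (\<mu>1 y ^ 2 + q ^ 2)) has_real_derivative 0) (at s)" if "s\<in>I" for s
    proof -
      have h: "((\<lambda>y. b y ^ 2 * (\<mu>1 y ^ 2 + q ^ 2)) has_real_derivative
          (of_nat 2 * (\<tau>g s * e * b s ^ (2 - Suc 0))) * (\<mu>1 s ^ 2 + q ^ 2) + (of_nat 2 * (1 * \<mu>1 s ^ (2 - Suc 0)) + 0) * b s ^ 2) (at s)"
        by (rule DERIV_mult[OF DERIV_power[OF db[OF that]] DERIV_add[OF DERIV_power[OF dmu1[OF that]] DERIV_const]])
      have "(of_nat 2 * (\<tau>g s * e * b s ^ (2 - Suc 0))) * (\<mu>1 s ^ 2 + q ^ 2) + (of_nat 2 * (1 * \<mu>1 s ^ (2 - Suc 0)) + 0) * b s ^ 2 = 0"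
        using qnz unfolding b_eq[OF that] tau[OF that] w_def by (simp add: field_simps power2_eq_square)
      then show ?thesis using h by simp
    qed
    obtain G0 where G0: "\<forall>s\<in>I. b s ^ 2 * (\<mu>1 s ^ 2 + q ^ 2) = G0"
      using zero_deriv_const_real[OF I(2) I(1), of "\<lambda>y. b y ^ 2 * (\<mu>1 y ^ 2 + q ^ 2)"] dG by auto
    obtain s0 where s0: "s0 \<in> I" using I(3) by blast
    have enz: "e \<noteq> 0"
    proof
      assume e0: "e = 0"
      then have "b s0 = 0" using b_eq[OF s0] by simp
      moreover then have "a s0 = 0" using a_eq[OF s0] by simp
      moreover have "d \<bullet> d = 1" using nd by (simp add: power2_norm_eq_inner[symmetric])
      moreover have "U s0 \<bullet> d = 0" "d \<bullet> U s0 = 0" using Ude s0 e0 by (auto simp: inner_commute)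
      ultimately show False
        using gram3[of "U s0" "T s0" d] ON[OF s0] V_def s0 unfolding a_def b_def by simp
    qed
    show "\<exists>c. \<forall>s\<in>I. (frenet_curvature \<gamma> s)\<^sup>2 /
                  ((frenet_curvature \<gamma> s)\<^sup>2 + (frenet_torsion \<gamma> s)\<^sup>2) powr (3/2) = c"
    proof (intro exI ballI)
      fix s assume s: "s \<in> I"
      have "G0 * q\<^sup>2 / e\<^sup>2 = (\<bar>kn s\<bar> * w s)\<^sup>2 * w s"
      proof -
        have G0s: "G0 = b s ^ 2 * (\<mu>1 s ^ 2 + q ^ 2)" using G0 s by simp
        show ?thesis using enz qnz unfolding G0s b_eq[OF s] w_def
          by (simp add: field_simps power2_eq_square power_mult_distrib abs_mult_self_eq)
      qed
      then have "sqrt (G0 * q\<^sup>2 / e\<^sup>2) = \<bar>kn s\<bar> * w s * sqrt (w s)"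
        using wpos[of s] by (simp add: real_sqrt_mult)
      then show "(frenet_curvature \<gamma> s)\<^sup>2 / ((frenet_curvature \<gamma> s)\<^sup>2 + (frenet_torsion \<gamma> s)\<^sup>2) powr (3/2)
          = \<bar>q\<bar>^3 / sqrt (G0 * q\<^sup>2 / e\<^sup>2)" using F[OF s] by simp
    qed
  next
    assume "\<exists>c. \<forall>s\<in>I. (frenet_curvature \<gamma> s)\<^sup>2 /
                  ((frenet_curvature \<gamma> s)\<^sup>2 + (frenet_torsion \<gamma> s)\<^sup>2) powr (3/2) = c"
    then obtain c where hc: "\<forall>s\<in>I. \<bar>q\<bar>^3 / (\<bar>kn s\<bar> * w s * sqrt (w s)) = c" using F by auto
    obtain s0 where s0: "s0 \<in> I" using I(3) by blast
    have Xpos: "\<bar>kn s\<bar> * w s * sqrt (w s) > 0" if "s\<in>I" for s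
      using kn_nonzero that wpos[of s] by simp
    have cpos: "c > 0" using hc s0 Xpos[OF s0] qnz by force
    define K where "K = \<bar>q\<bar>^3 / c"
    have Kpos: "K > 0" using cpos qnz unfolding K_def by simp
    have kabs: "\<bar>kn s\<bar> * w s * sqrt (w s) = K" if "s\<in>I" for s
    proof -
      have "\<bar>q\<bar>^3 / (\<bar>kn s\<bar> * w s * sqrt (w s)) = c" using hc that by blast
      then have "\<bar>q\<bar>^3 = c * (\<bar>kn s\<bar> * w s * sqrt (w s))" using Xpos[OF that] kn_nonzero that wpos[of s] by (simp add: divide_eq_eq)
      then show ?thesis using cpos unfolding K_def by simp
    qed
    have kn_eq: "\<forall>s\<in>I. Dg (Suc (Suc 0)) s \<bullet> U s = kn s" using D2 UU by simp
    have "continuous_on I (\<lambda>s. Dg (Suc (Suc 0)) s \<bullet> U s)"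
    proof (intro continuous_on_inner continuous_at_imp_continuous_on ballI)
      fix x assume x: "x \<in> I"
      show "isCont (Dg (Suc (Suc 0))) x" using has_vector_derivative_continuous[OF DgS[OF x]] .
      show "isCont U x" using has_vector_derivative_continuous[OF hU[OF x]] .
    qed
    then have contkn: "continuous_on I kn"
      using continuous_on_cong[OF refl, of I "\<lambda>s. Dg (Suc (Suc 0)) s \<bullet> U s" kn] kn_eq by simp
    have conn: "connected (kn ` I)" by (rule connected_continuous_image[OF contkn is_interval_connected[OF I(2)]])
    define \<sigma> where "\<sigma> = sgn (kn s0)"
    have sg: "sgn (kn s) = \<sigma>" if "s\<in>I" for s
    proof (rule ccontr)
      assume ne: "sgn (kn s) \<noteq> \<sigma>"
      have k0: "kn s0 \<noteq> 0" "kn s \<noteq> 0" using kn_nonzero s0 that by auto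
      have "min (kn s) (kn s0) \<le> 0" "0 \<le> max (kn s) (kn s0)"
        using ne k0 unfolding \<sigma>_def by (auto simp: sgn_if split: if_splits)
      moreover have "min (kn s) (kn s0) \<in> kn ` I" "max (kn s) (kn s0) \<in> kn ` I"
        using that s0 by (auto simp: min_def max_def)
      ultimately have "0 \<in> kn ` I" using conn unfolding connected_iff_interval by blast
      then show False using kn_nonzero by auto
    qed
    have sig2: "\<sigma> * \<sigma> = 1" using kn_nonzero s0 unfolding \<sigma>_def by (auto simp: sgn_if)
    have knf: "kn s = \<sigma> * K / (w s * sqrt (w s))" if "s\<in>I" for s
    proof -
      have "kn s = sgn (kn s) * \<bar>kn s\<bar>" by (simp add: sgn_mult_abs)
      then have k1: "kn s = \<sigma> * \<bar>kn s\<bar>" using sg[OF that] by simp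
      have "w s * sqrt (w s) > 0" using wpos[of s] by simp
      then have "\<bar>kn s\<bar> = K / (w s * sqrt (w s))" using kabs[OF that] wpos[of s] by (simp add: eq_divide_eq)
      then show ?thesis using k1 by simp
    qed
    define e where "e = 1 / sqrt (1 + K\<^sup>2 / q^4)"
    define A where "A = e * \<sigma> * K / q"
    define \<beta> where "\<beta> y = A / sqrt (w y)" for y
    have dw: "(w has_real_derivative (of_nat 2 * (1 * \<mu>1 s ^ (2 - Suc 0)) + 0)) (at s)" if "s\<in>I" for s
    proof -
      have wf: "w = (\<lambda>y. \<mu>1 y ^ 2 + q ^ 2)" unfolding w_def by (rule ext) simp
      show ?thesis unfolding wf by (rule DERIV_add[OF DERIV_power[OF dmu1[OF that]] DERIV_const])
    qed
    have dbeta: "(\<beta> has_real_derivative - A * \<mu>1 s / (w s * sqrt (w s))) (at s)" if "s\<in>I" for s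
    proof -
      have h1: "((\<lambda>y. sqrt (w y)) has_real_derivative inverse (sqrt (w s)) / 2 * (of_nat 2 * (1 * \<mu>1 s ^ (2 - Suc 0)) + 0)) (at s)"
        by (rule DERIV_chain2[OF DERIV_real_sqrt[OF wpos] dw[OF that]])
      have h2: "((\<lambda>y. A / sqrt (w y)) has_real_derivative
          (0 * sqrt (w s) - A * (inverse (sqrt (w s)) / 2 * (of_nat 2 * (1 * \<mu>1 s ^ (2 - Suc 0)) + 0))) / (sqrt (w s) * sqrt (w s))) (at s)"
        by (rule DERIV_divide[OF DERIV_const h1]) (use wpos[of s] in simp)
      have r: "sqrt (w s) * sqrt (w s) = w s" "sqrt (w s) > 0" using wpos[of s] by simp_all
      have "(0 * sqrt (w s) - A * (inverse (sqrt (w s)) / 2 * (of_nat 2 * (1 * \<mu>1 s ^ (2 - Suc 0)) + 0))) / (sqrt (w s) * sqrt (w s))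
          = - A * \<mu>1 s / (w s * sqrt (w s))" using r by (simp add: field_simps)
      then show ?thesis using h2 unfolding \<beta>_def by simp
    qed
    define Dv where "Dv y = (\<mu>1 y / q * \<beta> y) *\<^sub>R T y + \<beta> y *\<^sub>R V y + e *\<^sub>R U y" for y
    have dDv: "(Dv has_vector_derivative 0) (at s)" if "s\<in>I" for s
    proof -
      have h: "(Dv has_vector_derivative
          ((\<mu>1 s / q * \<beta> s) *\<^sub>R (kn s *\<^sub>R U s) + (1 / q * \<beta> s + (- A * \<mu>1 s / (w s * sqrt (w s))) * (\<mu>1 s / q)) *\<^sub>R T s
          + (\<beta> s *\<^sub>R (\<tau>g s *\<^sub>R U s) + (- A * \<mu>1 s / (w s * sqrt (w s))) *\<^sub>R V s)
          + (e *\<^sub>R (- kn s *\<^sub>R T s - \<tau>g s *\<^sub>R V s) + 0 *\<^sub>R U s))) (at s)"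
        unfolding Dv_def
        by (intro has_vector_derivative_add has_vector_derivative_scaleR DERIV_mult DERIV_cdivide
              dmu1 dbeta hT hV hU DERIV_const that)
      show ?thesis
      proof (rule frame_zero[OF h])
        have r: "sqrt (w s) * sqrt (w s) = w s" "sqrt (w s) > 0" using wpos[of s] by simp_all
        have wq: "w s = \<mu>1 s ^ 2 + q ^ 2" by (simp add: w_def)
        show "1 / q * \<beta> s + - A * \<mu>1 s / (w s * sqrt (w s)) * (\<mu>1 s / q) - e * kn s = 0"
          unfolding knf[OF that] \<beta>_def A_def by (rule c1lem[OF qnz r(2) wpos wq])
        show "\<mu>1 s / q * \<beta> s * kn s + \<beta> s * \<tau>g s = 0"
          using qnz unfolding tau[OF that] by (simp add: field_simps)
        show "- A * \<mu>1 s / (w s * sqrt (w s)) - e * \<tau>g s = 0"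
          unfolding tau[OF that] knf[OF that] A_def by (rule c3lem[OF qnz r(2) wpos])
      qed
    qed
    obtain dd where dd: "\<forall>s\<in>I. Dv s = dd" using zero_deriv_const[OF I(2) I(1), of Dv] dDv by auto
    have epos: "e > 0" and ele: "e \<le> 1" unfolding e_def by (simp_all add: add_pos_nonneg)
    have "dd \<bullet> dd = (\<mu>1 s0 / q * \<beta> s0)\<^sup>2 + (\<beta> s0)\<^sup>2 + e\<^sup>2"
      using dd[rule_format, OF s0, symmetric] ON[OF s0] unfolding Dv_def
      by (simp add: inner_add_left inner_add_right power2_eq_square)
    also have "\<dots> = 1"
    proof -
      have r: "sqrt (w s0) * sqrt (w s0) = w s0" "sqrt (w s0) > 0" using wpos[of s0] by simp_all
      have wq: "w s0 = \<mu>1 s0 ^ 2 + q ^ 2" by (simp add: w_def)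
      have p: "1 + K\<^sup>2 / q^4 > 0" by (simp add: add_pos_nonneg)
      have ee: "e\<^sup>2 * (1 + K\<^sup>2 / q^4) = 1" unfolding e_def using p by (simp add: power_divide)
      have b2: "(\<beta> s0)\<^sup>2 = A\<^sup>2 / w s0" unfolding \<beta>_def using r
        by (simp add: power_divide)
      have "(\<mu>1 s0 / q * \<beta> s0)\<^sup>2 + (\<beta> s0)\<^sup>2 = (\<beta> s0)\<^sup>2 * (\<mu>1 s0 ^ 2 + q ^ 2) / q\<^sup>2"
        using qnz by (simp add: field_simps power2_eq_square)
      also have "\<dots> = A\<^sup>2 / q\<^sup>2" unfolding b2 wq[symmetric] using wpos[of s0] by simp
      also have "\<dots> = e\<^sup>2 * K\<^sup>2 / q^4"
      proof -
        have "A\<^sup>2 = e\<^sup>2 * K\<^sup>2 * (\<sigma> * \<sigma>) / q\<^sup>2" unfolding A_def using qnz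
          by (simp add: power2_eq_square field_simps)
        then show ?thesis using sig2 qnz by (simp add: eval_nat_numeral field_simps)
      qed
      finally show ?thesis using ee by (simp add: field_simps)
    qed
    finally have "norm dd = 1" by (simp add: norm_eq_sqrt_inner)
    moreover have "\<forall>s\<in>I. U s \<bullet> dd = cos (arccos e)"
    proof
      fix s assume s: "s \<in> I"
      have "U s \<bullet> dd = U s \<bullet> Dv s" using dd s by simp
      also have "\<dots> = e" using ON[OF s] unfolding Dv_def by (simp add: inner_add_right)
      finally show "U s \<bullet> dd = cos (arccos e)" using epos ele by (simp add: cos_arccos)
    qed
    ultimately show "isophotic U I" unfolding isophotic_def by blast
  qed
qed

end
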